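(* Let $X$ be a finite connected poset and $K$ a field. For any $\theta\in\mathcal{M}(X)$ there exists a map $\sigma:X^2_<\to K^*$ compatible with $\theta$.
   Context: $X^2_<=\{(x,y)\in X^2: x<y\}$ and $K^*=K\setminus\{0\}$. For $x\le y$, $e_{xy}$ denotes the element of the incidence algebra $I(X,K)$ (functions $X\times X\to K$ vanishing off $\{x\le y\}$, with product $(fg)(x,y)=\sum_{x\le z\le y}f(x,z)g(z,y)$) equal to $1$ at $(x,y)$ and $0$ elsewhere; $B=\{e_{xy}:x<y\}$. For a bijection $\theta:B\to B$ and a maximal chain $C:u_1<\dots<u_m$, $\theta$ is increasing on $C$ if there is a maximal chain $D:v_1<\dots<v_m$ with $\theta(e_{u_iu_j})=e_{v_iv_j}$ for all $i<j$, decreasing if $\theta(e_{u_iu_j})=e_{v_{m-j+1}v_{m-i+1}}$ for all $i<j$. $\mathcal{M}(X)$ is the set of bijections $B\to B$ increasing or decreasing on every maximal chain. A map $\sigma:X^2_<\to K^*$ is compatible with a bijection $\theta:B\to B$ if, for all $x<y<z$, $\sigma(x,z)=\sigma(x,y)\sigma(y,z)$ whenever $\theta(e_{xz})=\theta(e_{xy})\theta(e_{yz})$, and $\sigma(x,z)=-\sigma(x,y)\sigma(y,z)$ whenever $\theta(e_{xz})=\theta(e_{yz})\theta(e_{xy})$ (products in $I(X,K)$). *)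

theory Defs
  imports Main
begin

text \<open>A finite poset is a finite set X of a type with a partial order. Elements of the
incidence algebra I(X,K) are represented as functions on pairs; they vanish off
{(x,y). x \<le> y, x,y \<in> X}.\<close>

definition incidence_algebra :: "'a::order set \<Rightarrow> ('a \<times> 'a \<Rightarrow> 'k::field) set" where
  "incidence_algebra X = {f. \<forall>x y. \<not> (x \<in> X \<and> y \<in> X \<and> x \<le> y) \<longrightarrow> f (x, y) = 0}"

definition inc_mult :: "'a::order set \<Rightarrow> ('a \<times> 'a \<Rightarrow> 'k::field) \<Rightarrow> ('a \<times> 'a \<Rightarrow> 'k) \<Rightarrow> ('a \<times> 'a \<Rightarrow> 'k)" where
  "inc_mult X f g = (\<lambda>(x, y). if x \<in> X \<and> y \<in> X \<and> x \<le> y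
      then (\<Sum>z\<in>{z\<in>X. x \<le> z \<and> z \<le> y}. f (x, z) * g (z, y)) else 0)"

definition e_elem :: "'a \<Rightarrow> 'a \<Rightarrow> ('a \<times> 'a \<Rightarrow> 'k::field)" where
  "e_elem x y = (\<lambda>p. if p = (x, y) then 1 else 0)"

definition basis_B :: "'a::order set \<Rightarrow> ('a \<times> 'a \<Rightarrow> 'k::field) set" where
  "basis_B X = {e_elem x y | x y. x \<in> X \<and> y \<in> X \<and> x < y}"

definition poset_connected :: "'a::order set \<Rightarrow> bool" where
  "poset_connected X \<longleftrightarrow> X \<noteq> {} \<and>
     (\<forall>x\<in>X. \<forall>y\<in>X. (\<lambda>a b. a \<in> X \<and> b \<in> X \<and> (a \<le> b \<or> b \<le> a))\<^sup>*\<^sup>* x y)"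

definition is_chain_in :: "'a::order set \<Rightarrow> 'a set \<Rightarrow> bool" where
  "is_chain_in X C \<longleftrightarrow> C \<subseteq> X \<and> (\<forall>a\<in>C. \<forall>b\<in>C. a \<le> b \<or> b \<le> a)"

definition is_maximal_chain :: "'a::order set \<Rightarrow> 'a set \<Rightarrow> bool" where
  "is_maximal_chain X C \<longleftrightarrow> is_chain_in X C \<and> (\<forall>D. is_chain_in X D \<and> C \<subseteq> D \<longrightarrow> D = C)"

definition max_chain_list :: "'a::order set \<Rightarrow> 'a list \<Rightarrow> bool" where
  "max_chain_list X us \<longleftrightarrow> sorted_wrt (<) us \<and> is_maximal_chain X (set us)"

definition increasing_on :: "'a::order set \<Rightarrow> (('a \<times> 'a \<Rightarrow> 'k::field) \<Rightarrow> ('a \<times> 'a \<Rightarrow> 'k)) \<Rightarrow> 'a list \<Rightarrow> bool" where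
  "increasing_on X \<theta> us \<longleftrightarrow> (\<exists>vs. max_chain_list X vs \<and> length vs = length us \<and>
      (\<forall>i j. i < j \<and> j < length us \<longrightarrow> \<theta> (e_elem (us ! i) (us ! j)) = e_elem (vs ! i) (vs ! j)))"

definition decreasing_on :: "'a::order set \<Rightarrow> (('a \<times> 'a \<Rightarrow> 'k::field) \<Rightarrow> ('a \<times> 'a \<Rightarrow> 'k)) \<Rightarrow> 'a list \<Rightarrow> bool" where
  "decreasing_on X \<theta> us \<longleftrightarrow> (\<exists>vs. max_chain_list X vs \<and> length vs = length us \<and>
      (\<forall>i j. i < j \<and> j < length us \<longrightarrow>
         \<theta> (e_elem (us ! i) (us ! j)) = e_elem (vs ! (length us - 1 - j)) (vs ! (length us - 1 - i))))"

definition M_set :: "'a::order set \<Rightarrow> (('a \<times> 'a \<Rightarrow> 'k::field) \<Rightarrow> ('a \<times> 'a \<Rightarrow> 'k)) set" where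
  "M_set X = {\<theta>. bij_betw \<theta> (basis_B X) (basis_B X) \<and>
      (\<forall>us. max_chain_list X us \<longrightarrow> increasing_on X \<theta> us \<or> decreasing_on X \<theta> us)}"

text \<open>sigma : X^2_< \<rightarrow> K^*; values outside X^2_< are irrelevant.\<close>
definition compatible :: "'a::order set \<Rightarrow> ('a \<times> 'a \<Rightarrow> 'k::field) \<Rightarrow> (('a \<times> 'a \<Rightarrow> 'k) \<Rightarrow> ('a \<times> 'a \<Rightarrow> 'k)) \<Rightarrow> bool" where
  "compatible X \<sigma> \<theta> \<longleftrightarrow> (\<forall>x\<in>X. \<forall>y\<in>X. \<forall>z\<in>X. x < y \<and> y < z \<longrightarrow>
      (\<theta> (e_elem x z) = inc_mult X (\<theta> (e_elem x y)) (\<theta> (e_elem y z)) \<longrightarrow> \<sigma> (x, z) = \<sigma> (x, y) * \<sigma> (y, z)) \<and>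
      (\<theta> (e_elem x z) = inc_mult X (\<theta> (e_elem y z)) (\<theta> (e_elem x y)) \<longrightarrow> \<sigma> (x, z) = - (\<sigma> (x, y) * \<sigma> (y, z))))"

end

theory Submission
  imports Defs
begin

lemma e_elem_nz: "(e_elem a b :: 'a \<times> 'a \<Rightarrow> 'k::field) \<noteq> (\<lambda>_. 0)"
proof
  assume "(e_elem a b :: 'a \<times> 'a \<Rightarrow> 'k::field) = (\<lambda>_. 0)"
  then have "(e_elem a b :: 'a \<times> 'a \<Rightarrow> 'k::field) (a, b) = 0" by simp
  then show False by (simp add: e_elem_def)
qed

lemma e_elem_inj: "(e_elem a b :: 'a \<times> 'a \<Rightarrow> 'k::field) = e_elem c d \<longleftrightarrow> a = c \<and> b = d"
proof
  assume "(e_elem a b :: 'a \<times> 'a \<Rightarrow> 'k::field) = e_elem c d"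
  then have "(e_elem a b :: 'a \<times> 'a \<Rightarrow> 'k::field) (a, b) = e_elem c d (a, b)" by simp
  then show "a = c \<and> b = d" by (simp add: e_elem_def split: if_splits)
qed simp

lemma inc_mult_e:
  assumes "finite X"
  shows "inc_mult X (e_elem a b) (e_elem c d :: 'a::order \<times> 'a \<Rightarrow> 'k::field) =
    (if b = c \<and> a \<in> X \<and> b \<in> X \<and> d \<in> X \<and> a \<le> b \<and> b \<le> d then e_elem a d else (\<lambda>_. 0))"
proof (rule ext, clarify)
  fix p q :: 'a
  let ?S = "{z\<in>X. p \<le> z \<and> z \<le> q}"
  have fin: "finite ?S" using assms by simp
  have eq: "(\<lambda>z. (e_elem a b :: 'a \<times> 'a \<Rightarrow> 'k) (p, z) * e_elem c d (z, q)) =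
        (\<lambda>z. if z = b then (if p = a \<and> b = c \<and> q = d then 1 else 0) else 0)"
    by (auto simp: e_elem_def)
  have S: "(\<Sum>z\<in>?S. (e_elem a b :: 'a \<times> 'a \<Rightarrow> 'k) (p, z) * e_elem c d (z, q)) =
     (if b \<in> ?S then (if p = a \<and> b = c \<and> q = d then 1 else 0) else 0)"
    unfolding eq using fin by (simp only: sum.delta)
  have "inc_mult X (e_elem a b) (e_elem c d :: 'a \<times> 'a \<Rightarrow> 'k) (p, q) =
     (if p \<in> X \<and> q \<in> X \<and> p \<le> q then (\<Sum>z\<in>?S. (e_elem a b :: 'a \<times> 'a \<Rightarrow> 'k) (p, z) * e_elem c d (z, q)) else 0)"
    by (simp add: inc_mult_def)
  also have "\<dots> = (if p \<in> X \<and> q \<in> X \<and> p \<le> q then (if b \<in> ?S then (if p = a \<and> b = c \<and> q = d then 1 else 0) else 0) else 0)"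
    using S by simp
  also have "\<dots> = (if b = c \<and> a \<in> X \<and> b \<in> X \<and> d \<in> X \<and> a \<le> b \<and> b \<le> d then e_elem a d else (\<lambda>_. 0)) (p, q)"
  proof (cases "p = a \<and> b = c \<and> q = d")
    case True
    have "a \<le> b \<Longrightarrow> b \<le> d \<Longrightarrow> a \<le> d" by (rule order_trans)
    then show ?thesis using True by (auto simp: e_elem_def)
  next
    case False
    then show ?thesis by (auto simp: e_elem_def)
  qed
  finally show "inc_mult X (e_elem a b) (e_elem c d :: 'a \<times> 'a \<Rightarrow> 'k) (p, q) =
    (if b = c \<and> a \<in> X \<and> b \<in> X \<and> d \<in> X \<and> a \<le> b \<and> b \<le> d then e_elem a d else (\<lambda>_. 0)) (p, q)" .
qed

lemma sorted_nth_less: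
  assumes "sorted_wrt (<) xs" "i < length xs" "j < length xs" "xs ! i < (xs ! j :: 'a::order)"
  shows "i < j"
proof (rule ccontr)
  assume "\<not> i < j"
  then have "j < i \<or> j = i" by auto
  then show False
  proof
    assume "j < i" then have "xs ! j < xs ! i" using assms sorted_wrt_nth_less by blast
    then show False using assms(4) by auto
  qed (use assms(4) in auto)
qed

lemma sorted_distinct: "sorted_wrt (<) (xs :: 'a::order list) \<Longrightarrow> distinct xs"
  by (induction xs) auto

lemma sorted_strict_eq:
  "sorted_wrt (<) (xs :: 'a::order list) \<Longrightarrow> sorted_wrt (<) ys \<Longrightarrow> set xs = set ys \<Longrightarrow> xs = ys"
proof (induction xs arbitrary: ys)
  case Nil then show ?case by simp
next
  case (Cons x xs)
  then obtain y ys' where ys: "ys = y # ys'" by (cases ys) auto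
  have "x = y"
  proof (rule ccontr)
    assume "x \<noteq> y"
    then have "x \<in> set ys'" "y \<in> set xs" using Cons.prems ys by auto
    then show False using Cons.prems ys by fastforce
  qed
  moreover have "set xs = set ys'"
    using Cons.prems ys \<open>x = y\<close> sorted_distinct[of "x # xs"] sorted_distinct[of "y # ys'"]
    by (metis distinct.simps(2) list.simps(15) Diff_insert_absorb)
  ultimately show ?case using Cons ys by auto
qed

lemma chain_list:
  assumes "finite C" "\<forall>a\<in>C. \<forall>b\<in>C. a \<le> b \<or> b \<le> (a :: 'a::order)"
  shows "\<exists>us. sorted_wrt (<) us \<and> set us = C"
  using assms
proof (induction C rule: finite_induct)
  case empty then show ?case by simp
next
  case (insert x F)
  then obtain us where us: "sorted_wrt (<) us" "set us = F" by auto
  let ?vs = "filter (\<lambda>y. y < x) us @ x # filter (\<lambda>y. x < y) us"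
  have "sorted_wrt (<) ?vs"
    using us by (auto simp: sorted_wrt_append sorted_wrt_filter intro: less_trans)
  moreover have "set ?vs = insert x F"
  proof -
    have "\<forall>y\<in>F. y < x \<or> x < y" using insert by (metis insertCI order_le_less)
    then show ?thesis using us by auto
  qed
  ultimately show ?case by blast
qed

lemma extend_max:
  assumes "finite X" "is_chain_in X S"
  shows "\<exists>C. is_maximal_chain X C \<and> S \<subseteq> C"
proof -
  let ?Cs = "{C. is_chain_in X C \<and> S \<subseteq> C}"
  have "?Cs \<subseteq> Pow X" by (auto simp: is_chain_in_def)
  then have "finite ?Cs" using assms(1) by (meson finite_Pow_iff finite_subset)
  moreover have "?Cs \<noteq> {}" using assms by auto
  ultimately obtain m where m: "m \<in> ?Cs" "\<forall>b\<in>?Cs. m \<le> b \<longrightarrow> m = b"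
    using finite_has_maximal[of ?Cs] by meson
  have "is_maximal_chain X m"
    unfolding is_maximal_chain_def
  proof (intro conjI allI impI)
    show "is_chain_in X m" using m(1) by simp
  next
    fix D assume "is_chain_in X D \<and> m \<subseteq> D"
    then have "D \<in> ?Cs" "m \<subseteq> D" using m(1) by auto
    then show "D = m" using m(2) by metis
  qed
  then show ?thesis using m(1) by blast
qed

lemma in_max_list:
  assumes "finite X" "is_chain_in X S"
  shows "\<exists>us. max_chain_list X us \<and> S \<subseteq> set us"
proof -
  obtain C where C: "is_maximal_chain X C" "S \<subseteq> C" using extend_max assms by blast
  then have "finite C" using assms(1) by (auto simp: is_maximal_chain_def is_chain_in_def intro: finite_subset)
  moreover have "\<forall>a\<in>C. \<forall>b\<in>C. a \<le> b \<or> b \<le> a" using C(1) by (simp add: is_maximal_chain_def is_chain_in_def)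
  ultimately obtain us where "sorted_wrt (<) us" "set us = C"
    using chain_list by blast
  then show ?thesis using C by (auto simp: max_chain_list_def)
qed


locale LS =
  fixes X :: "'a::order set" and \<theta> :: "('a \<times> 'a \<Rightarrow> 'k::field) \<Rightarrow> ('a \<times> 'a \<Rightarrow> 'k)"
  assumes fin: "finite X" and Mset: "\<theta> \<in> M_set X"
begin

lemma bij: "bij_betw \<theta> (basis_B X) (basis_B X)" using Mset by (simp add: M_set_def)

lemma mono_chain: "max_chain_list X us \<Longrightarrow> increasing_on X \<theta> us \<or> decreasing_on X \<theta> us"
  using Mset by (simp add: M_set_def)

lemma theta_B:
  assumes "x \<in> X" "y \<in> X" "x < y"
  obtains a b where "a \<in> X" "b \<in> X" "a < b" "\<theta> (e_elem x y) = e_elem a b"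
proof -
  have "(e_elem x y :: 'a \<times> 'a \<Rightarrow> 'k) \<in> basis_B X" unfolding basis_B_def using assms by blast
  then have "\<theta> (e_elem x y) \<in> basis_B X" by (rule bij_betw_apply[OF bij])
  then obtain a b where "a \<in> X" "b \<in> X" "a < b" "\<theta> (e_elem x y) = e_elem a b"
    unfolding basis_B_def by blast
  then show ?thesis using that by blast
qed

lemma theta_inj:
  assumes "x \<in> X" "y \<in> X" "x < y" "x' \<in> X" "y' \<in> X" "x' < y'"
    and "\<theta> (e_elem x y) = \<theta> (e_elem x' y')"
  shows "x = x' \<and> y = y'"
proof -
  have m1: "(e_elem x y :: 'a \<times> 'a \<Rightarrow> 'k) \<in> basis_B X" unfolding basis_B_def using assms by blast
  have m2: "(e_elem x' y' :: 'a \<times> 'a \<Rightarrow> 'k) \<in> basis_B X" unfolding basis_B_def using assms by blast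
  have inj: "inj_on \<theta> (basis_B X)" by (rule bij_betw_imp_inj_on[OF bij])
  have "(e_elem x y :: 'a \<times> 'a \<Rightarrow> 'k) = e_elem x' y'"
    using inj_onD[OF inj assms(7) m1 m2] .
  then show ?thesis by (simp add: e_elem_inj)
qed

definition inc3 where "inc3 x y z \<longleftrightarrow> \<theta> (e_elem x z) = inc_mult X (\<theta> (e_elem x y)) (\<theta> (e_elem y z))"
definition dec3 where "dec3 x y z \<longleftrightarrow> \<theta> (e_elem x z) = inc_mult X (\<theta> (e_elem y z)) (\<theta> (e_elem x y))"

lemma not_both:
  assumes "x \<in> X" "y \<in> X" "z \<in> X" "x < y" "y < z" "inc3 x y z" "dec3 x y z"
  shows False
proof -
  have "x < z" using assms by auto
  obtain a b where ab: "a \<in> X" "b \<in> X" "a < b" "\<theta> (e_elem x y) = e_elem a b" using theta_B assms by metis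
  obtain c d where cd: "c \<in> X" "d \<in> X" "c < d" "\<theta> (e_elem y z) = e_elem c d" using theta_B assms by metis
  obtain p q where pq: "\<theta> (e_elem x z) = e_elem p q" using theta_B assms \<open>x < z\<close> by metis
  have "b = c"
  proof (rule ccontr)
    assume "b \<noteq> c"
    then have "\<theta> (e_elem x z) = (\<lambda>_. 0)" using assms(6) ab cd by (simp add: inc3_def inc_mult_e fin)
    then show False using pq e_elem_nz by metis
  qed
  moreover have "d = a"
  proof (rule ccontr)
    assume "d \<noteq> a"
    then have "\<theta> (e_elem x z) = (\<lambda>_. 0)" using assms(7) ab cd by (simp add: dec3_def inc_mult_e fin)
    then show False using pq e_elem_nz by metis
  qed
  ultimately show False using ab cd by auto
qed

lemma mcl_props:
  assumes "max_chain_list X us"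
  shows "sorted_wrt (<) us" "set us \<subseteq> X"
  using assms by (auto simp: max_chain_list_def is_maximal_chain_def is_chain_in_def)

lemma mcl_nth:
  assumes "max_chain_list X us" "i < length us"
  shows "us ! i \<in> X"
  using mcl_props[OF assms(1)] assms(2) by auto

lemma mcl_less:
  assumes "max_chain_list X us" "i < j" "j < length us"
  shows "us ! i < us ! j"
  using mcl_props[OF assms(1)] assms(2,3) sorted_wrt_nth_less by blast

lemma mcl_le:
  assumes "max_chain_list X us" "i < j" "j < length us"
  shows "us ! i \<le> us ! j"
  using mcl_less[OF assms] by simp

lemma inc_types:
  assumes "max_chain_list X us" "increasing_on X \<theta> us" "i < j" "j < k" "k < length us"
  shows "inc3 (us ! i) (us ! j) (us ! k)"
proof -
  obtain vs where vs: "max_chain_list X vs" "length vs = length us"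
    "\<forall>i j. i < j \<and> j < length us \<longrightarrow> \<theta> (e_elem (us ! i) (us ! j)) = e_elem (vs ! i) (vs ! j)"
    using assms(2) unfolding increasing_on_def by blast
  have "\<theta> (e_elem (us ! i) (us ! k)) = e_elem (vs ! i) (vs ! k)"
    "\<theta> (e_elem (us ! i) (us ! j)) = e_elem (vs ! i) (vs ! j)"
    "\<theta> (e_elem (us ! j) (us ! k)) = e_elem (vs ! j) (vs ! k)"
    using vs(3) assms by auto
  moreover have "vs ! i \<in> X" "vs ! j \<in> X" "vs ! k \<in> X" "vs ! i \<le> vs ! j" "vs ! j \<le> vs ! k"
    using mcl_nth[OF vs(1)] mcl_le[OF vs(1)] assms vs(2) by auto
  ultimately show ?thesis unfolding inc3_def by (simp add: inc_mult_e fin)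
qed

lemma dec_types:
  assumes "max_chain_list X us" "decreasing_on X \<theta> us" "i < j" "j < k" "k < length us"
  shows "dec3 (us ! i) (us ! j) (us ! k)"
proof -
  let ?m = "length us"
  obtain vs where vs: "max_chain_list X vs" "length vs = length us"
    "\<forall>i j. i < j \<and> j < length us \<longrightarrow> \<theta> (e_elem (us ! i) (us ! j)) = e_elem (vs ! (?m - 1 - j)) (vs ! (?m - 1 - i))"
    using assms(2) unfolding decreasing_on_def by blast
  have "\<theta> (e_elem (us ! i) (us ! k)) = e_elem (vs ! (?m - 1 - k)) (vs ! (?m - 1 - i))"
    "\<theta> (e_elem (us ! i) (us ! j)) = e_elem (vs ! (?m - 1 - j)) (vs ! (?m - 1 - i))"
    "\<theta> (e_elem (us ! j) (us ! k)) = e_elem (vs ! (?m - 1 - k)) (vs ! (?m - 1 - j))"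
    using vs(3) assms by auto
  moreover have "vs ! (?m - 1 - i) \<in> X" "vs ! (?m - 1 - j) \<in> X" "vs ! (?m - 1 - k) \<in> X"
    using mcl_nth[OF vs(1)] assms vs(2) by auto
  moreover have "vs ! (?m - 1 - k) \<le> vs ! (?m - 1 - j)" "vs ! (?m - 1 - j) \<le> vs ! (?m - 1 - i)"
    using mcl_le[OF vs(1)] assms vs(2) by auto
  ultimately show ?thesis unfolding dec3_def by (simp add: inc_mult_e fin)
qed

lemma find_idx:
  assumes "x \<in> set us"
  obtains i where "i < length us" "us ! i = x"
  using assms by (meson in_set_conv_nth)

lemma idx_order:
  assumes "max_chain_list X us" "i < length us" "j < length us" "us ! i < us ! j"
  shows "i < j"
  using sorted_nth_less mcl_props(1)[OF assms(1)] assms(2-4) by blast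

lemma types3:
  assumes "x \<in> X" "y \<in> X" "z \<in> X" "x < y" "y < z"
  shows "inc3 x y z \<or> dec3 x y z"
proof -
  have "x \<le> z" using assms order.strict_trans less_imp_le by metis
  then have "is_chain_in X {x, y, z}" using assms unfolding is_chain_in_def by (simp add: less_imp_le)
  then obtain us where us: "max_chain_list X us" "{x, y, z} \<subseteq> set us" using in_max_list[OF fin] by blast
  have "x \<in> set us" "y \<in> set us" "z \<in> set us" using us(2) by simp_all
  then obtain i j k where i: "i < length us" "us ! i = x" and j: "j < length us" "us ! j = y"
    and k: "k < length us" "us ! k = z" by (metis in_set_conv_nth)
  have "i < j" using idx_order[OF us(1) i(1) j(1)] i j assms by simp
  have "j < k" using idx_order[OF us(1) j(1) k(1)] k j assms by simp
  consider "increasing_on X \<theta> us" | "decreasing_on X \<theta> us" using mono_chain[OF us(1)] by blast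
  then show ?thesis
  proof cases
    case 1
    then have "inc3 (us ! i) (us ! j) (us ! k)" using inc_types[OF us(1) 1 \<open>i < j\<close> \<open>j < k\<close> k(1)] by simp
    then show ?thesis using i j k by simp
  next
    case 2
    then have "dec3 (us ! i) (us ! j) (us ! k)" using dec_types[OF us(1) 2 \<open>i < j\<close> \<open>j < k\<close> k(1)] by simp
    then show ?thesis using i j k by simp
  qed
qed

lemma sign_iff:
  assumes "x \<in> X" "y \<in> X" "z \<in> X" "x < y" "y < z"
  shows "inc3 x y z \<longleftrightarrow> \<not> dec3 x y z"
  using types3[OF assms] not_both[OF assms] by blast

lemma G1:
  assumes "a \<in> X" "b \<in> X" "c \<in> X" "d \<in> X" "a < b" "b < c" "c < d"
  shows "dec3 a b c = dec3 b c d" "dec3 a b d = dec3 b c d" "dec3 a c d = dec3 b c d"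
proof -
  have lt: "a < c" "a < d" "b < d" using assms by (meson order.strict_trans)+
  have "is_chain_in X {a, b, c, d}" using assms lt unfolding is_chain_in_def by (simp add: less_imp_le)
  then obtain us where us: "max_chain_list X us" "{a, b, c, d} \<subseteq> set us" using in_max_list[OF fin] by blast
  have "a \<in> set us" "b \<in> set us" "c \<in> set us" "d \<in> set us" using us(2) by simp_all
  then obtain i j k l where i: "i < length us" "us ! i = a" and j: "j < length us" "us ! j = b"
    and k: "k < length us" "us ! k = c" and l: "l < length us" "us ! l = d" by (metis in_set_conv_nth)
  have o: "i < j" "j < k" "k < l"
    using idx_order[OF us(1) i(1) j(1)] idx_order[OF us(1) j(1) k(1)] idx_order[OF us(1) k(1) l(1)] i j k l assms
    by simp_all
  consider "increasing_on X \<theta> us" | "decreasing_on X \<theta> us" using mono_chain[OF us(1)] by blast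
  then have "(dec3 a b c \<and> dec3 b c d \<and> dec3 a b d \<and> dec3 a c d) \<or>
     (\<not> dec3 a b c \<and> \<not> dec3 b c d \<and> \<not> dec3 a b d \<and> \<not> dec3 a c d)"
  proof cases
    case 1
    have "inc3 a b c" "inc3 b c d" "inc3 a b d" "inc3 a c d"
      using inc_types[OF us(1) 1] o i j k l by (metis less_trans)+
    moreover have "inc3 a b c \<longleftrightarrow> \<not> dec3 a b c" "inc3 b c d \<longleftrightarrow> \<not> dec3 b c d"
      "inc3 a b d \<longleftrightarrow> \<not> dec3 a b d" "inc3 a c d \<longleftrightarrow> \<not> dec3 a c d"
      using sign_iff assms lt by simp_all
    ultimately show ?thesis by simp
  next
    case 2
    have "dec3 a b c" "dec3 b c d" "dec3 a b d" "dec3 a c d"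
      using dec_types[OF us(1) 2] o i j k l by (metis less_trans)+
    then show ?thesis by blast
  qed
  then show "dec3 a b c = dec3 b c d" "dec3 a b d = dec3 b c d" "dec3 a c d = dec3 b c d" by blast+
qed


definition rel where "rel us vs \<longleftrightarrow> max_chain_list X vs \<and> length vs = length us \<and>
  ((\<forall>i j. i < j \<and> j < length us \<longrightarrow> \<theta> (e_elem (us ! i) (us ! j)) = e_elem (vs ! i) (vs ! j)) \<or>
   (\<forall>i j. i < j \<and> j < length us \<longrightarrow> \<theta> (e_elem (us ! i) (us ! j)) =
        e_elem (vs ! (length us - 1 - j)) (vs ! (length us - 1 - i))))"

lemma rel_ex: assumes "max_chain_list X us" shows "\<exists>vs. rel us vs"
proof -
  consider "increasing_on X \<theta> us" | "decreasing_on X \<theta> us" using mono_chain[OF assms] by blast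
  then show ?thesis
  proof cases
    case 1 then show ?thesis unfolding increasing_on_def rel_def by blast
  next
    case 2 then show ?thesis unfolding decreasing_on_def rel_def by blast
  qed
qed

definition F where "F us = (SOME vs. rel us vs)"

lemma F_rel: "max_chain_list X us \<Longrightarrow> rel us (F us)"
  unfolding F_def using rel_ex someI_ex by metis

definition MC2 where "MC2 = {us. max_chain_list X us \<and> 2 \<le> length us}"

lemma MC2_finite: "finite MC2"
proof -
  have "MC2 \<subseteq> {xs. set xs \<subseteq> X \<and> length xs \<le> card X}"
  proof
    fix us assume "us \<in> MC2"
    then have us: "max_chain_list X us" by (simp add: MC2_def)
    have "set us \<subseteq> X" using mcl_props[OF us] by simp
    moreover have "distinct us" using mcl_props[OF us] sorted_distinct by blast
    ultimately have "length us \<le> card X" using card_mono[OF fin] distinct_card by metis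
    then show "us \<in> {xs. set xs \<subseteq> X \<and> length xs \<le> card X}" using \<open>set us \<subseteq> X\<close> by simp
  qed
  then show ?thesis using finite_lists_length_le[OF fin] finite_subset by blast
qed

lemma F_into: "F ` MC2 \<subseteq> MC2"
proof
  fix vs assume "vs \<in> F ` MC2"
  then obtain us where "us \<in> MC2" "vs = F us" by blast
  then have "max_chain_list X us" "2 \<le> length us" "rel us vs" using F_rel by (auto simp: MC2_def)
  then show "vs \<in> MC2" unfolding MC2_def rel_def by simp
qed

lemma rel_fwd:
  assumes "rel us vs" "p < q" "q < length us"
  shows "\<exists>k l. k < l \<and> l < length us \<and> \<theta> (e_elem (us ! p) (us ! q)) = e_elem (vs ! k) (vs ! l)"
proof -
  let ?m = "length us"
  consider "\<forall>i j. i < j \<and> j < ?m \<longrightarrow> \<theta> (e_elem (us ! i) (us ! j)) = e_elem (vs ! i) (vs ! j)"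
    | "\<forall>i j. i < j \<and> j < ?m \<longrightarrow> \<theta> (e_elem (us ! i) (us ! j)) = e_elem (vs ! (?m - 1 - j)) (vs ! (?m - 1 - i))"
    using assms(1) unfolding rel_def by blast
  then show ?thesis
  proof cases
    case 1 then show ?thesis using assms(2,3) by blast
  next
    case 2
    have "?m - 1 - q < ?m - 1 - p" "?m - 1 - p < ?m" using assms(2,3) by auto
    then show ?thesis using 2 assms(2,3) by blast
  qed
qed

lemma rel_bwd:
  assumes "rel us vs" "k < l" "l < length us"
  shows "\<exists>p q. p < q \<and> q < length us \<and> \<theta> (e_elem (us ! p) (us ! q)) = e_elem (vs ! k) (vs ! l)"
proof -
  let ?m = "length us"
  consider "\<forall>i j. i < j \<and> j < ?m \<longrightarrow> \<theta> (e_elem (us ! i) (us ! j)) = e_elem (vs ! i) (vs ! j)"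
    | "\<forall>i j. i < j \<and> j < ?m \<longrightarrow> \<theta> (e_elem (us ! i) (us ! j)) = e_elem (vs ! (?m - 1 - j)) (vs ! (?m - 1 - i))"
    using assms(1) unfolding rel_def by blast
  then show ?thesis
  proof cases
    case 1 then show ?thesis using assms(2,3) by blast
  next
    case 2
    have lt: "?m - 1 - l < ?m - 1 - k" "?m - 1 - k < ?m" using assms(2,3) by auto
    have e1: "?m - 1 - (?m - 1 - k) = k" "?m - 1 - (?m - 1 - l) = l" using assms(2,3) by auto
    have "\<theta> (e_elem (us ! (?m - 1 - l)) (us ! (?m - 1 - k))) = e_elem (vs ! k) (vs ! l)"
      using 2 lt e1 by metis
    then show ?thesis using lt by blast
  qed
qed

lemma pair_in:
  assumes "max_chain_list X us" "max_chain_list X us'" "rel us vs" "rel us' vs" "p < q" "q < length us"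
  shows "us ! p \<in> set us' \<and> us ! q \<in> set us'"
proof -
  obtain k l where kl: "k < l" "l < length us" "\<theta> (e_elem (us ! p) (us ! q)) = e_elem (vs ! k) (vs ! l)"
    using rel_fwd[OF assms(3,5,6)] by blast
  have "length us' = length us" using assms(3,4) unfolding rel_def by simp
  then obtain p' q' where pq: "p' < q'" "q' < length us'" "\<theta> (e_elem (us' ! p') (us' ! q')) = e_elem (vs ! k) (vs ! l)"
    using rel_bwd[OF assms(4) kl(1)] kl(2) by auto
  have "us ! p = us' ! p' \<and> us ! q = us' ! q'"
  proof (rule theta_inj)
    show "us ! p \<in> X" "us ! q \<in> X" "us ! p < us ! q" using mcl_nth[OF assms(1)] mcl_less[OF assms(1)] assms(5,6) by auto
    show "us' ! p' \<in> X" "us' ! q' \<in> X" "us' ! p' < us' ! q'" using mcl_nth[OF assms(2)] mcl_less[OF assms(2)] pq(1,2) by auto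
    show "\<theta> (e_elem (us ! p) (us ! q)) = \<theta> (e_elem (us' ! p') (us' ! q'))" using kl(3) pq(3) by simp
  qed
  then show ?thesis using pq(1,2) by auto
qed

lemma F_inj: "inj_on F MC2"
proof (rule inj_onI)
  fix us us' assume A: "us \<in> MC2" "us' \<in> MC2" "F us = F us'"
  have u: "max_chain_list X us" "2 \<le> length us" and u': "max_chain_list X us'" using A by (auto simp: MC2_def)
  have r: "rel us (F us)" "rel us' (F us)" using F_rel[OF u(1)] F_rel[OF u'] A(3) by simp_all
  have "set us \<subseteq> set us'"
  proof
    fix u assume "u \<in> set us"
    then obtain i where i: "i < length us" "us ! i = u" by (metis in_set_conv_nth)
    have lm: "length us - 1 < length us" using u(2) by simp
    show "u \<in> set us'"
    proof (cases "i < length us - 1")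
      case True
      then show ?thesis using pair_in[OF u(1) u' r True lm] i(2) by simp
    next
      case False
      then have "0 < i" "i = length us - 1" using i u(2) by auto
      then show ?thesis using pair_in[OF u(1) u' r \<open>0 < i\<close> i(1)] i(2) by simp
    qed
  qed
  moreover have "is_maximal_chain X (set us)" "is_chain_in X (set us')"
    using u u' by (auto simp: max_chain_list_def is_maximal_chain_def)
  ultimately have "set us' = set us" unfolding is_maximal_chain_def by simp
  then show "us = us'" using sorted_strict_eq[OF mcl_props(1)[OF u(1)] mcl_props(1)[OF u']] by simp
qed

lemma F_surj: "F ` MC2 = MC2"
  by (rule endo_inj_surj[OF MC2_finite F_into F_inj])


lemma G2':
  assumes X: "t1 \<in> X" "t2 \<in> X" "x \<in> X" "y \<in> X" and lt: "t1 < x" "t2 < x" "x < y"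
    and inc: "inc3 t1 x y" and dec: "dec3 t2 x y"
  shows False
proof -
  have t1y: "t1 < y" and t2y: "t2 < y" using lt by (meson order.strict_trans)+
  obtain a b where ab: "a \<in> X" "b \<in> X" "a < b" "\<theta> (e_elem x y) = e_elem a b"
    using theta_B[OF X(3,4) lt(3)] by metis
  obtain c a' where ca: "c \<in> X" "a' \<in> X" "c < a'" "\<theta> (e_elem t1 x) = e_elem c a'"
    using theta_B[OF X(1,3) lt(1)] by metis
  obtain p q where pq: "\<theta> (e_elem t1 y) = e_elem p q"
    using theta_B[OF X(1,4) t1y] by metis
  have "a' = a"
  proof (rule ccontr)
    assume "a' \<noteq> a"
    then have "\<theta> (e_elem t1 y) = (\<lambda>_. 0)" using inc ab ca unfolding inc3_def by (simp add: inc_mult_e fin)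
    then show False using pq e_elem_nz by metis
  qed
  obtain b' f where bf: "b' \<in> X" "f \<in> X" "b' < f" "\<theta> (e_elem t2 x) = e_elem b' f"
    using theta_B[OF X(2,3) lt(2)] by metis
  obtain r s where rs: "\<theta> (e_elem t2 y) = e_elem r s"
    using theta_B[OF X(2,4) t2y] by metis
  have "b' = b"
  proof (rule ccontr)
    assume "b' \<noteq> b"
    then have "\<theta> (e_elem t2 y) = (\<lambda>_. 0)" using dec ab bf unfolding dec3_def by (simp add: inc_mult_e fin)
    then show False using rs e_elem_nz by metis
  qed
  have ca2: "c < a" "\<theta> (e_elem t1 x) = e_elem c a" using ca \<open>a' = a\<close> by simp_all
  have bf2: "b < f" "\<theta> (e_elem t2 x) = e_elem b f" using bf \<open>b' = b\<close> by simp_all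
  have o: "c < b" "c < f" "a < f" using ca2(1) ab(3) bf2(1) by (meson order.strict_trans)+
  have "is_chain_in X {c, a, b, f}"
    using ab ca2 bf2 o ca(1) bf(2) unfolding is_chain_in_def by (simp add: less_imp_le)
  then obtain ds where ds: "max_chain_list X ds" "{c, a, b, f} \<subseteq> set ds" using in_max_list[OF fin] by blast
  have "c \<in> set ds" "a \<in> set ds" "b \<in> set ds" "f \<in> set ds" using ds(2) by simp_all
  then obtain ic ia ib iff where ic: "ic < length ds" "ds ! ic = c" and ia: "ia < length ds" "ds ! ia = a"
    and ib: "ib < length ds" "ds ! ib = b" and iff: "iff < length ds" "ds ! iff = f" by (metis in_set_conv_nth)
  have io: "ic < ia" "ia < ib" "ib < iff"
    using idx_order[OF ds(1) ic(1) ia(1)] idx_order[OF ds(1) ia(1) ib(1)] idx_order[OF ds(1) ib(1) iff(1)]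
      ic ia ib iff ca2(1) ab(3) bf2(1) by simp_all
  have "2 \<le> length ds" using io iff(1) by simp
  then have "ds \<in> MC2" using ds(1) by (simp add: MC2_def)
  then obtain us where us: "us \<in> MC2" "ds = F us" using F_surj by (metis imageE)
  have usm: "max_chain_list X us" using us(1) by (simp add: MC2_def)
  have r: "rel us ds" using F_rel[OF usm] us(2) by simp
  let ?m = "length us"
  have len: "length ds = ?m" using r by (simp add: rel_def)
  have uX: "\<And>i. i < ?m \<Longrightarrow> us ! i \<in> X" using mcl_nth[OF usm] by simp
  have uL: "\<And>i j. i < j \<Longrightarrow> j < ?m \<Longrightarrow> us ! i < us ! j" using mcl_less[OF usm] by simp
  consider "\<forall>i j. i < j \<and> j < ?m \<longrightarrow> \<theta> (e_elem (us ! i) (us ! j)) = e_elem (ds ! i) (ds ! j)"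
    | "\<forall>i j. i < j \<and> j < ?m \<longrightarrow> \<theta> (e_elem (us ! i) (us ! j)) = e_elem (ds ! (?m - 1 - j)) (ds ! (?m - 1 - i))"
    using r unfolding rel_def by blast
  then show False
  proof cases
    case 1
    have h1: "\<theta> (e_elem (us ! ia) (us ! ib)) = \<theta> (e_elem x y)"
      using 1 io ib(1) len ia(2) ib(2) ab(4) by simp
    have "us ! ia = x \<and> us ! ib = y"
      by (rule theta_inj[OF uX uX uL X(3,4) lt(3) h1]) (use io ib(1) len in auto)
    moreover have h2: "\<theta> (e_elem (us ! ib) (us ! iff)) = \<theta> (e_elem t2 x)"
      using 1 io iff(1) len ib(2) iff(2) bf2(2) by simp
    have "us ! ib = t2 \<and> us ! iff = x"
      by (rule theta_inj[OF uX uX uL X(2,3) lt(2) h2]) (use io iff(1) len in auto)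
    ultimately show False using lt by auto
  next
    case 2
    have i1: "?m - 1 - ib < ?m - 1 - ia" "?m - 1 - ia < ?m" "?m - 1 - ic < ?m" "?m - 1 - ia < ?m - 1 - ic"
      using io iff(1) len by auto
    have e1: "?m - 1 - (?m - 1 - ia) = ia" "?m - 1 - (?m - 1 - ib) = ib" "?m - 1 - (?m - 1 - ic) = ic"
      using io iff(1) len by auto
    have h1: "\<theta> (e_elem (us ! (?m - 1 - ib)) (us ! (?m - 1 - ia))) = \<theta> (e_elem x y)"
      using 2 i1 e1 ia(2) ib(2) ab(4) by simp
    have "us ! (?m - 1 - ib) = x \<and> us ! (?m - 1 - ia) = y"
      by (rule theta_inj[OF uX uX uL X(3,4) lt(3) h1]) (use i1 in auto)
    moreover have h2: "\<theta> (e_elem (us ! (?m - 1 - ia)) (us ! (?m - 1 - ic))) = \<theta> (e_elem t1 x)"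
      using 2 i1 e1 ia(2) ic(2) ca2(2) by simp
    have "us ! (?m - 1 - ia) = t1 \<and> us ! (?m - 1 - ic) = x"
      by (rule theta_inj[OF uX uX uL X(1,3) lt(1) h2]) (use i1 in auto)
    ultimately show False using lt by auto
  qed
qed

lemma G2:
  assumes "t1 \<in> X" "t2 \<in> X" "x \<in> X" "y \<in> X" "t1 < x" "t2 < x" "x < y"
  shows "dec3 t1 x y = dec3 t2 x y"
proof -
  have "inc3 t1 x y \<longleftrightarrow> \<not> dec3 t1 x y" using sign_iff assms by simp
  moreover have "inc3 t2 x y \<longleftrightarrow> \<not> dec3 t2 x y" using sign_iff assms by simp
  ultimately show ?thesis using G2'[OF assms(1-7)] G2'[OF assms(2,1,3,4,6,5,7)] by blast
qed

definition sg :: "bool \<Rightarrow> 'k" where "sg b = (if b then -1 else 1)"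

definition sig :: "'a \<times> 'a \<Rightarrow> 'k" where
  "sig = (\<lambda>(x, y). if \<exists>w\<in>X. w < x then sg (dec3 (SOME w. w \<in> X \<and> w < x) x y) else 1)"

lemma sig_nz: "sig p \<noteq> 0"
  by (cases p) (simp add: sig_def sg_def)

lemma sg_sq: "sg b * sg b = 1"
  by (simp add: sg_def)

lemma key:
  assumes X: "x \<in> X" "y \<in> X" "z \<in> X" and lt: "x < y" "y < z"
  shows "sig (x, z) = sg (dec3 x y z) * sig (x, y) * sig (y, z)"
proof -
  let ?s = "dec3 x y z"
  have ex_y: "\<exists>w\<in>X. w < y" using X lt by blast
  define wy where "wy = (SOME w. w \<in> X \<and> w < y)"
  have wy: "wy \<in> X" "wy < y" using someI_ex[of "\<lambda>w. w \<in> X \<and> w < y"] ex_y unfolding wy_def by auto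
  have "sig (y, z) = sg (dec3 wy y z)" using ex_y by (simp add: sig_def wy_def)
  also have "dec3 wy y z = ?s" using G2[OF wy(1) X(1) X(2) X(3) wy(2) lt(1) lt(2)] .
  finally have syz: "sig (y, z) = sg ?s" .
  show ?thesis
  proof (cases "\<exists>w\<in>X. w < x")
    case True
    define wx where "wx = (SOME w. w \<in> X \<and> w < x)"
    have wx: "wx \<in> X" "wx < x" using someI_ex[of "\<lambda>w. w \<in> X \<and> w < x"] True unfolding wx_def by auto
    have "sig (x, y) = sg (dec3 wx x y)" "sig (x, z) = sg (dec3 wx x z)"
      using True by (simp_all add: sig_def wx_def)
    moreover have "dec3 wx x y = ?s" "dec3 wx x z = ?s"
      using G1[OF wx(1) X wx(2) lt] by simp_all
    ultimately show ?thesis using syz by (simp add: sg_def)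
  next
    case False
    then have "sig (x, y) = 1" "sig (x, z) = 1" by (simp_all add: sig_def)
    then show ?thesis using syz by (simp add: sg_def)
  qed
qed

lemma sig_compatible: "compatible X sig \<theta>"
  unfolding compatible_def
proof (intro ballI impI conjI)
  fix x y z assume X: "x \<in> X" "y \<in> X" "z \<in> X" and lt: "x < y \<and> y < z"
  have k: "sig (x, z) = sg (dec3 x y z) * sig (x, y) * sig (y, z)" using key X lt by blast
  {
    assume "\<theta> (e_elem x z) = inc_mult X (\<theta> (e_elem x y)) (\<theta> (e_elem y z))"
    then have "inc3 x y z" by (simp add: inc3_def)
    then have "\<not> dec3 x y z" using not_both X lt by blast
    then show "sig (x, z) = sig (x, y) * sig (y, z)" using k by (simp add: sg_def)
  }
  {
    assume "\<theta> (e_elem x z) = inc_mult X (\<theta> (e_elem y z)) (\<theta> (e_elem x y))"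
    then have "dec3 x y z" by (simp add: dec3_def)
    then show "sig (x, z) = - (sig (x, y) * sig (y, z))" using k by (simp add: sg_def)
  }
qed

end

theorem lemma2p8:
  fixes X :: "'a::order set" and \<theta> :: "('a \<times> 'a \<Rightarrow> 'k::field) \<Rightarrow> ('a \<times> 'a \<Rightarrow> 'k)"
  assumes "finite X" and "poset_connected X" and "\<theta> \<in> M_set X"
  shows "\<exists>\<sigma> :: 'a \<times> 'a \<Rightarrow> 'k. (\<forall>x\<in>X. \<forall>y\<in>X. x < y \<longrightarrow> \<sigma> (x, y) \<noteq> 0) \<and> compatible X \<sigma> \<theta>"
proof -
  interpret LS X \<theta> using assms(1,3) by unfold_locales
  show ?thesis using sig_nz sig_compatible by blast
qed

end
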